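(* Let $d\ge 1$, let $\Omega\subset\mathbb{R}^d$ be a bounded domain and $\Omega_{\rm c}\subset\Omega$ an open polytope with a triangulation $\mathcal{T}_h$ into closed simplices. Let $\mathcal{L}=\overline{\Omega}\cap\mathbb{Z}^d$, let $\mathcal{R}\subset\mathbb{Z}^d\setminus\{0\}$ be a finite set of bond directions and $\phi:\mathbb{R}^d\to\mathbb{R}$ a function. Let $\mathcal{B}=\{(x,x+r): x,x+r\in\mathcal{L},\ r\in\mathcal{R}\}$, $\mathcal{B}_{\rm c}=\{b\in\mathcal{B}: b\subset\Omega_{\rm c}\}$ and $\mathcal{B}_{\rm a}=\mathcal{B}\setminus\mathcal{B}_{\rm c}$. Let $y:\mathcal{L}\cup\overline{\Omega_{\rm c}}\to\mathbb{R}^d$ be continuous on $\overline{\Omega_{\rm c}}$ and affine on each $T\in\mathcal{T}_h$. Then \[ \sum_{b\in\mathcal{B}_{\rm a}}\phi(D_b y)+\sum_{b\in\mathcal{B}_{\rm c}}\int_0^1\phi\big(\nabla_{r_b}y(x_b+\lambda r_b)\big)\,d\lambda =\sum_{b\in\mathcal{B}_{\rm a}}\phi(D_b y)+\sum_{T\in\mathcal{T}_h}\sum_{r\in\mathcal{R}}\Omega_{T,r}\,\phi\big(\nabla_r y|_T\big), \] where for a bond $b=(x_b,x_b+r_b)$ we write $D_b y=y(x_b+r_b)-y(x_b)$, $\nabla_r y$ denotes the directional derivative of $y$ in the direction $r$ (i.e. $\nabla_r y(x)=\frac{d}{d\lambda}y(x+\lambda r)|_{\lambda=0}$, well defined for a.e.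 $\lambda$ along a bond contained in $\Omega_{\rm c}$), $\nabla_r y|_T$ is its constant value on $T$, and \[ \Omega_{T,r}:=\sum_{\substack{x\in\mathbb{Z}^d\\ (x,x+r)\in\mathcal{B}_{\rm c}}}\int_0^1\chi_T(x+\lambda r)\,d\lambda . \]
   Context: A bond $(x,x+r)$ is the open segment $\{x+\lambda r:\lambda\in(0,1)\}$. For a polytope $\omega\subset\mathbb{R}^d$ its characteristic function is defined pointwise by $\chi_\omega(x):=\lim_{\rho\to0}|\omega\cap B_\rho(x)|/|B_\rho(x)|$, where $B_\rho(x)$ is the ball of radius $\rho$ centered at $x$ (so it equals $1$ in the interior, $1/2$ on facets, and the normalized solid angle on lower-dimensional faces). *)

theory Defs
  imports "HOL-Analysis.Analysis"
begin

definition lattice_pts :: "(real^'n) set" where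
  "lattice_pts = {x. \<forall>i. x $ i \<in> \<int>}"

definition char_fun :: "(real^'n) set \<Rightarrow> real^'n \<Rightarrow> real" where
  "char_fun \<omega> x = Lim (at_right 0)
     (\<lambda>\<rho>. measure lebesgue (\<omega> \<inter> ball x \<rho>) / measure lebesgue (ball x \<rho>))"

definition dir_deriv :: "(real^'n \<Rightarrow> real^'n) \<Rightarrow> real^'n \<Rightarrow> real^'n \<Rightarrow> real^'n" where
  "dir_deriv y r x = vector_derivative (\<lambda>t. y (x + t *\<^sub>R r)) (at 0)"

text \<open>Constant value of the directional derivative on a (full-dimensional) simplex T,
  evaluated at an interior point of T.\<close>
definition dir_deriv_on :: "(real^'n \<Rightarrow> real^'n) \<Rightarrow> (real^'n) set \<Rightarrow> real^'n \<Rightarrow> real^'n" where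
  "dir_deriv_on y T r = dir_deriv y r (SOME x. x \<in> interior T)"

definition triangulation :: "(real^'n) set set \<Rightarrow> (real^'n) set \<Rightarrow> bool" where
  "triangulation \<T> S \<longleftrightarrow> finite \<T> \<and> \<Union>\<T> = S \<and>
     (\<forall>T\<in>\<T>. int CARD('n) simplex T) \<and>
     (\<forall>T\<in>\<T>. \<forall>T'\<in>\<T>. (T \<inter> T') face_of T \<and> (T \<inter> T') face_of T')"

text \<open>Bonds (x, x+r), encoded as pairs (x, r).\<close>
definition bonds :: "(real^'n) set \<Rightarrow> (real^'n) set \<Rightarrow> ((real^'n) \<times> (real^'n)) set" where
  "bonds L R = {(x, r). x \<in> L \<and> x + r \<in> L \<and> r \<in> R}"

definition bonds_c :: "(real^'n) set \<Rightarrow> (real^'n) set \<Rightarrow> (real^'n) set \<Rightarrow> ((real^'n) \<times> (real^'n)) set" where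
  "bonds_c L R \<Omega>c = {(x, r) \<in> bonds L R. open_segment x (x + r) \<subseteq> \<Omega>c}"

definition bond_weight :: "(real^'n) set \<Rightarrow> (real^'n) set \<Rightarrow> (real^'n) set \<Rightarrow> (real^'n) set \<Rightarrow> real^'n \<Rightarrow> real" where
  "bond_weight L R \<Omega>c T r =
     (\<Sum>x\<in>{x. (x, r) \<in> bonds_c L R \<Omega>c}. integral {0..1} (\<lambda>t. char_fun T (x + t *\<^sub>R r)))"

end

theory Submission
  imports Defs
begin


definition ratio :: "(real^'n) set \<Rightarrow> real^'n \<Rightarrow> real \<Rightarrow> real" where
  "ratio T z \<rho> = measure lebesgue (T \<inter> ball z \<rho>) / measure lebesgue (ball z \<rho>)"

lemma measure_ball_eq:
  fixes z :: "real^'n"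
  assumes "\<rho> \<ge> 0"
  shows "measure lebesgue (ball z \<rho>) = \<rho> ^ CARD('n) * measure lebesgue (ball (0::real^'n) 1)"
  using content_ball_conv_unit_ball[OF assms, of z] by simp

lemma unit_ball_pos: "measure lebesgue (ball (0::real^'n) 1) > 0"
  using content_ball_pos[of 1 "0::real^'n"] by simp

lemma closed_lebesgue: "closed (T::(real^'n) set) \<Longrightarrow> T \<in> sets lebesgue"
  by (simp add: borel_closed)

lemma closed_ball_lmeas: "closed (T::(real^'n) set) \<Longrightarrow> T \<inter> ball z \<rho> \<in> lmeasurable"
  by (metis Int_commute closed_lebesgue fmeasurable_Int_fmeasurable lmeasurable_ball)

lemma scaled_measure_le:
  fixes T :: "(real^'n) set"
  assumes "convex T" "closed T" "z \<in> T" "0 < s" "s \<le> 1" "0 < \<rho>"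
  shows "s ^ CARD('n) * measure lebesgue (T \<inter> ball z \<rho>) \<le> measure lebesgue (T \<inter> ball z (s*\<rho>))"
proof -
  let ?f = "\<lambda>w::real^'n. s *\<^sub>R w + (1 - s) *\<^sub>R z"
  have sub: "?f ` (T \<inter> ball z \<rho>) \<subseteq> T \<inter> ball z (s*\<rho>)"
  proof
    fix v assume "v \<in> ?f ` (T \<inter> ball z \<rho>)"
    then obtain w where w: "w \<in> T" "dist z w < \<rho>" and v: "v = ?f w" by auto
    have "v \<in> T" using assms(1) w(1) assms(3) assms(4,5) unfolding v convex_def by auto
    moreover have "dist z v = s * dist z w"
    proof -
      have "z - v = s *\<^sub>R (z - w)" unfolding v by (simp add: algebra_simps)
      then show ?thesis using assms(4) by (simp add: dist_norm)
    qed
    ultimately show "v \<in> T \<inter> ball z (s*\<rho>)" using w assms(4) by auto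
  qed
  have m1: "T \<inter> ball z (s*\<rho>) \<in> lmeasurable" by (rule closed_ball_lmeas[OF assms(2)])
  have m0: "T \<inter> ball z \<rho> \<in> lmeasurable" by (rule closed_ball_lmeas[OF assms(2)])
  have "emeasure lebesgue (?f ` (T \<inter> ball z \<rho>)) = ennreal (s ^ CARD('n)) * emeasure lebesgue (T \<inter> ball z \<rho>)"
    using emeasure_lebesgue_affine[of s "(1 - s) *\<^sub>R z" "T \<inter> ball z \<rho>"] assms by simp
  also have "\<dots> = ennreal (s ^ CARD('n) * measure lebesgue (T \<inter> ball z \<rho>))"
    using m0 assms by (simp add: emeasure_eq_measure2 ennreal_mult)
  finally have e1: "emeasure lebesgue (?f ` (T \<inter> ball z \<rho>)) = ennreal (s ^ CARD('n) * measure lebesgue (T \<inter> ball z \<rho>))" .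
  have "emeasure lebesgue (?f ` (T \<inter> ball z \<rho>)) \<le> emeasure lebesgue (T \<inter> ball z (s*\<rho>))"
    using sub m1 by (intro emeasure_mono) auto
  also have "\<dots> = ennreal (measure lebesgue (T \<inter> ball z (s*\<rho>)))"
    using m1 by (simp add: emeasure_eq_measure2)
  finally show ?thesis using e1 by (simp add: ennreal_le_iff)
qed

lemma ratio_mono:
  fixes T :: "(real^'n) set"
  assumes "convex T" "closed T" "z \<in> T" "0 < \<rho>'" "\<rho>' \<le> \<rho>"
  shows "ratio T z \<rho> \<le> ratio T z \<rho>'"
proof -
  define s where "s = \<rho>' / \<rho>"
  have s: "0 < s" "s \<le> 1" "\<rho>' = s * \<rho>" using assms by (auto simp: s_def)
  have c0: "measure lebesgue (ball (0::real^'n) 1) > 0" by (rule unit_ball_pos)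
  have le: "s ^ CARD('n) * measure lebesgue (T \<inter> ball z \<rho>) \<le> measure lebesgue (T \<inter> ball z \<rho>')"
    using scaled_measure_le[OF assms(1-3) s(1,2), of \<rho>] s assms by simp
  have "ratio T z \<rho> = (s ^ CARD('n) * measure lebesgue (T \<inter> ball z \<rho>)) / ((s*\<rho>) ^ CARD('n) * measure lebesgue (ball (0::real^'n) 1))"
  proof -
    have "measure lebesgue (ball z \<rho>) = \<rho> ^ CARD('n) * measure lebesgue (ball (0::real^'n) 1)"
      using assms by (intro measure_ball_eq) auto
    then show ?thesis unfolding ratio_def using s assms c0 by (simp add: power_mult_distrib)
  qed
  also have "\<dots> \<le> measure lebesgue (T \<inter> ball z \<rho>') / ((s*\<rho>) ^ CARD('n) * measure lebesgue (ball (0::real^'n) 1))"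
    using le s assms c0 by (intro divide_right_mono) auto
  also have "\<dots> = ratio T z \<rho>'"
  proof -
    have "measure lebesgue (ball z \<rho>') = (s*\<rho>) ^ CARD('n) * measure lebesgue (ball (0::real^'n) 1)"
      unfolding s(3) by (rule measure_ball_eq) (use s assms in auto)
    then show ?thesis unfolding ratio_def using s assms c0 by simp
  qed
  finally show ?thesis .
qed

lemma ratio_bounds:
  fixes T :: "(real^'n) set"
  assumes "closed T" "0 < \<rho>"
  shows "0 \<le> ratio T z \<rho>" "ratio T z \<rho> \<le> 1"
proof -
  have m: "T \<inter> ball z \<rho> \<in> lmeasurable" by (rule closed_ball_lmeas[OF assms(1)])
  have "measure lebesgue (T \<inter> ball z \<rho>) \<le> measure lebesgue (ball z \<rho>)"
    by (rule measure_mono_fmeasurable[OF _ fmeasurableD[OF m] lmeasurable_ball]) auto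
  moreover have "measure lebesgue (ball z \<rho>) > 0"
    using assms measure_ball_eq[of \<rho> z] unit_ball_pos[where 'n='n] by simp
  ultimately show "0 \<le> ratio T z \<rho>" "ratio T z \<rho> \<le> 1" unfolding ratio_def by auto
qed

lemma char_fun_Lim: "char_fun T z = Lim (at_right 0) (ratio T z)"
  unfolding char_fun_def ratio_def[abs_def] by simp

lemma ratio_tendsto:
  fixes T :: "(real^'n) set"
  assumes "convex T" "closed T"
  shows "(ratio T z \<longlongrightarrow> char_fun T z) (at_right 0)"
proof (cases "z \<in> T")
  case True
  define L where "L = (SUP \<rho>\<in>{0<..}. ratio T z \<rho>)"
  have bdd: "bdd_above (ratio T z ` {0<..})"
    using ratio_bounds(2)[OF assms(2)] by (auto intro!: bdd_aboveI[of _ 1])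
  have ub: "ratio T z \<rho> \<le> L" if "\<rho> > 0" for \<rho>
    unfolding L_def using bdd that by (intro cSUP_upper) auto
  have lim: "(ratio T z \<longlongrightarrow> L) (at_right 0)"
  proof (rule order_tendstoI)
    fix a assume "a < L"
    then obtain \<rho>0 where r0: "\<rho>0 > 0" "a < ratio T z \<rho>0"
      unfolding L_def using bdd by (subst (asm) less_cSUP_iff) auto
    have "a < ratio T z x" if "0 < x" "x < \<rho>0" for x
      using r0(2) ratio_mono[OF assms True, of x \<rho>0] that by linarith
    then show "\<forall>\<^sub>F x in at_right 0. a < ratio T z x"
      unfolding eventually_at_right_field using r0(1) by blast
  next
    fix a assume "a > L"
    then have "ratio T z x < a" if "0 < x" "x < 1" for x
      using ub[OF that(1)] by linarith
    then show "\<forall>\<^sub>F x in at_right 0. ratio T z x < a"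
      unfolding eventually_at_right_field by (intro exI[of _ 1]) simp
  qed
  have "Lim (at_right 0) (ratio T z) = L"
    by (rule tendsto_Lim[OF trivial_limit_at_right_real lim])
  then show ?thesis using lim by (simp add: char_fun_Lim)
next
  case False
  have "open (- T)" using assms(2) by (simp add: open_Compl)
  then obtain e where e: "e > 0" "ball z e \<subseteq> - T" using False open_contains_ball by blast
  have "ratio T z x = 0" if "0 < x" "x < e" for x
  proof -
    have "ball z x \<subseteq> ball z e" using that by auto
    then have "T \<inter> ball z x = {}" using e(2) by blast
    then show ?thesis by (simp add: ratio_def)
  qed
  then have ev: "\<forall>\<^sub>F \<rho> in at_right 0. ratio T z \<rho> = 0"
    unfolding eventually_at_right_field using e(1) by blast
  then have lim: "(ratio T z \<longlongrightarrow> 0) (at_right 0)"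
    by (rule tendsto_eventually)
  have "Lim (at_right 0) (ratio T z) = 0"
    by (rule tendsto_Lim[OF trivial_limit_at_right_real lim])
  then show ?thesis using lim by (simp add: char_fun_Lim)
qed




lemma char_bounds:
  fixes T :: "(real^'n) set"
  assumes "convex T" "closed T"
  shows "0 \<le> char_fun T z" "char_fun T z \<le> 1"
proof -
  have ev: "\<forall>\<^sub>F \<rho> in at_right 0. 0 \<le> ratio T z \<rho> \<and> ratio T z \<rho> \<le> 1"
    unfolding eventually_at_right_field using ratio_bounds[OF assms(2)] by (intro exI[of _ 1]) auto
  show "0 \<le> char_fun T z"
    by (rule tendsto_lowerbound[OF ratio_tendsto[OF assms]]) (use ev in \<open>auto elim: eventually_mono\<close>)
  show "char_fun T z \<le> 1"
    by (rule tendsto_upperbound[OF ratio_tendsto[OF assms]]) (use ev in \<open>auto elim: eventually_mono\<close>)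
qed

lemma char_zero:
  fixes T :: "(real^'n) set"
  assumes "convex T" "closed T" "z \<notin> T"
  shows "char_fun T z = 0"
proof -
  have "open (- T)" using assms(2) by (simp add: open_Compl)
  then obtain e where e: "e > 0" "ball z e \<subseteq> - T" using assms(3) open_contains_ball by blast
  have "ratio T z x = 0" if "0 < x" "x < e" for x
  proof -
    have "ball z x \<subseteq> ball z e" using that by auto
    then have "T \<inter> ball z x = {}" using e(2) by blast
    then show ?thesis by (simp add: ratio_def)
  qed
  then have ev: "\<forall>\<^sub>F \<rho> in at_right 0. ratio T z \<rho> = 0"
    unfolding eventually_at_right_field using e(1) by blast
  then have lim: "(ratio T z \<longlongrightarrow> 0) (at_right 0)"
    by (rule tendsto_eventually)
  show ?thesis using tendsto_unique[OF trivial_limit_at_right_real ratio_tendsto[OF assms(1,2)] lim] .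
qed

lemma meas_shift:
  fixes T :: "(real^'n) set"
  assumes "closed T" "dist z w < \<rho>"
  shows "measure lebesgue (T \<inter> ball z \<rho>) \<le> measure lebesgue (T \<inter> ball w \<rho>)
           + (measure lebesgue (ball z \<rho>) - measure lebesgue (ball z (\<rho> - dist z w)))"
proof -
  let ?D = "ball z \<rho> - ball z (\<rho> - dist z w)"
  have sub: "T \<inter> ball z \<rho> \<subseteq> (T \<inter> ball w \<rho>) \<union> ?D"
  proof
    fix v assume v: "v \<in> T \<inter> ball z \<rho>"
    show "v \<in> (T \<inter> ball w \<rho>) \<union> ?D"
    proof (cases "v \<in> ball z (\<rho> - dist z w)")
      case True
      then have "dist w v < \<rho>" using dist_triangle[of w v z] by (auto simp: dist_commute)
      then show ?thesis using v by auto
    qed (use v in auto)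
  qed
  have mD: "?D \<in> lmeasurable" by (intro fmeasurable_Diff) auto
  have "measure lebesgue (T \<inter> ball z \<rho>) \<le> measure lebesgue ((T \<inter> ball w \<rho>) \<union> ?D)"
    by (rule measure_mono_fmeasurable[OF sub]) (use closed_ball_lmeas[OF assms(1)] mD in auto)
  also have "\<dots> \<le> measure lebesgue (T \<inter> ball w \<rho>) + measure lebesgue ?D"
    by (rule measure_Un_le) (use closed_ball_lmeas[OF assms(1)] mD in auto)
  also have "measure lebesgue ?D = measure lebesgue (ball z \<rho>) - measure lebesgue (ball z (\<rho> - dist z w))"
  proof (rule measure_Diff)
    show "emeasure lebesgue (ball z \<rho>) \<noteq> \<infinity>"
      using emeasure_lborel_ball_finite[of z \<rho>] by simp
    show "ball z (\<rho> - dist z w) \<subseteq> ball z \<rho>" by (rule subset_ball) simp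
  qed auto
  finally show ?thesis .
qed

lemma meas_cont:
  fixes T :: "(real^'n) set"
  assumes "closed T" "0 < \<rho>"
  shows "continuous_on UNIV (\<lambda>z. measure lebesgue (T \<inter> ball z \<rho>))"
proof -
  define c0 where "c0 = measure lebesgue (ball (0::real^'n) 1)"
  have mb: "measure lebesgue (ball z r) = r ^ CARD('n) * c0" if "r \<ge> 0" for z :: "real^'n" and r
    using measure_ball_eq[OF that] by (simp add: c0_def)
  have "isCont (\<lambda>z. measure lebesgue (T \<inter> ball z \<rho>)) z" for z
  proof -
    let ?f = "\<lambda>w. measure lebesgue (T \<inter> ball w \<rho>)"
    let ?g = "\<lambda>w. c0 * (\<rho> ^ CARD('n) - (\<rho> - dist w z) ^ CARD('n))"
    have bnd: "norm (?f w - ?f z) \<le> ?g w" if w: "w \<noteq> z" "dist w z < \<rho>" for w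
    proof -
      have d: "dist z w < \<rho>" "dist w z < \<rho>" using w by (auto simp: dist_commute)
      have 1: "?f z \<le> ?f w + ?g w"
        using meas_shift[OF assms(1) d(1)] mb[of \<rho> z] mb[of "\<rho> - dist z w" z] d assms
        by (simp add: dist_commute algebra_simps)
      have 2: "?f w \<le> ?f z + ?g w"
        using meas_shift[OF assms(1) d(2)] mb[of \<rho> w] mb[of "\<rho> - dist w z" w] d assms
        by (simp add: dist_commute algebra_simps)
      show ?thesis using 1 2 unfolding real_norm_def by linarith
    qed
    have ev: "\<forall>\<^sub>F w in at z. norm (?f w - ?f z) \<le> ?g w"
      unfolding eventually_at using bnd assms(2) by blast
    have "(?g \<longlongrightarrow> c0 * (\<rho> ^ CARD('n) - (\<rho> - dist z z) ^ CARD('n))) (at z)"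
      by (intro tendsto_intros)
    then have g0: "(?g \<longlongrightarrow> 0) (at z)" by simp
    have "((\<lambda>w. ?f w - ?f z) \<longlongrightarrow> 0) (at z)"
      by (rule Lim_null_comparison[OF ev g0])
    then show ?thesis unfolding isCont_def by (simp add: LIM_zero_iff)
  qed
  then show ?thesis by (simp add: continuous_on_eq_continuous_at)
qed




lemma char_integrable:
  fixes T :: "(real^'n) set"
  assumes "convex T" "closed T"
  shows "(\<lambda>t. char_fun T (x + t *\<^sub>R r)) integrable_on {0..1}"
proof -
  define c0 where "c0 = measure lebesgue (ball (0::real^'n) 1)"
  define u where "u n t = ratio T (x + t *\<^sub>R r) (inverse (real (Suc n)))" for n t
  have fl: "filterlim (\<lambda>n. inverse (real (Suc n))) (at_right 0) sequentially"
    by (simp add: filterlim_at LIMSEQ_inverse_real_of_nat del: of_nat_Suc)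
  have conv: "(\<lambda>n. u n t) \<longlonglongrightarrow> char_fun T (x + t *\<^sub>R r)" for t
    unfolding u_def by (rule filterlim_compose[OF ratio_tendsto[OF assms] fl])
  have cont: "continuous_on {0..1} (u n)" for n
  proof -
    define \<rho> where "\<rho> = inverse (real (Suc n))"
    have \<rho>: "\<rho> > 0" by (simp add: \<rho>_def)
    have eq: "u n = (\<lambda>t. measure lebesgue (T \<inter> ball (x + t *\<^sub>R r) \<rho>) / (\<rho> ^ CARD('n) * c0))"
    proof
      fix t
      have mb: "measure lebesgue (ball (x + t *\<^sub>R r) \<rho>) = \<rho> ^ CARD('n) * c0"
        unfolding c0_def by (rule measure_ball_eq) (use \<rho> in simp)
      show "u n t = measure lebesgue (T \<inter> ball (x + t *\<^sub>R r) \<rho>) / (\<rho> ^ CARD('n) * c0)"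
        by (simp only: u_def ratio_def \<rho>_def[symmetric] mb)
    qed
    have "continuous_on {0..1} (\<lambda>t. measure lebesgue (T \<inter> ball (x + t *\<^sub>R r) \<rho>))"
      by (rule continuous_on_compose2[OF meas_cont[OF assms(2) \<rho>]]) (auto intro!: continuous_intros)
    moreover have "c0 > 0" unfolding c0_def by (rule unit_ball_pos)
    ultimately show ?thesis unfolding eq using \<rho> by (intro continuous_intros) auto
  qed
  have meas: "(\<lambda>t. char_fun T (x + t *\<^sub>R r)) \<in> borel_measurable (lebesgue_on {0..1})"
    by (rule borel_measurable_LIMSEQ_real[OF conv])
       (rule continuous_imp_measurable_on_sets_lebesgue[OF cont], simp)
  show ?thesis
    by (rule measurable_bounded_by_integrable_imp_integrable[OF meas, of "\<lambda>_. 1"])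
       (use char_bounds[OF assms] in auto)
qed

lemma char_sum:
  fixes \<T> :: "(real^'n) set set"
  assumes "finite \<T>" "\<And>T. T \<in> \<T> \<Longrightarrow> convex T \<and> closed T"
    and "pairwise (\<lambda>T T'. negligible (T \<inter> T')) \<T>"
    and "e > 0" "ball z e \<subseteq> \<Union>\<T>"
  shows "(\<Sum>T\<in>\<T>. char_fun T z) = 1"
proof -
  have one: "(\<Sum>T\<in>\<T>. ratio T z \<rho>) = 1" if \<rho>: "0 < \<rho>" "\<rho> < e" for \<rho>
  proof -
    have eq: "ball z \<rho> = (\<Union>T\<in>\<T>. T \<inter> ball z \<rho>)"
      using assms(5) \<rho> by auto
    have "measure lebesgue (\<Union>T\<in>\<T>. T \<inter> ball z \<rho>) = (\<Sum>T\<in>\<T>. measure lebesgue (T \<inter> ball z \<rho>))"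
    proof (rule measure_negligible_finite_Union_image[OF assms(1)])
      show "T \<inter> ball z \<rho> \<in> lmeasurable" if "T \<in> \<T>" for T
        using closed_ball_lmeas assms(2) that by blast
      show "pairwise (\<lambda>T T'. negligible (T \<inter> ball z \<rho> \<inter> (T' \<inter> ball z \<rho>))) \<T>"
        using assms(3) unfolding pairwise_def by (blast intro: negligible_subset)
    qed
    then have "measure lebesgue (ball z \<rho>) = (\<Sum>T\<in>\<T>. measure lebesgue (T \<inter> ball z \<rho>))"
      using eq by simp
    moreover have "measure lebesgue (ball z \<rho>) > 0"
      using \<rho> measure_ball_eq[of \<rho> z] unit_ball_pos[where 'n='n] by simp
    ultimately show ?thesis unfolding ratio_def sum_divide_distrib[symmetric] by simp
  qed
  have ev: "\<forall>\<^sub>F \<rho> in at_right 0. (\<Sum>T\<in>\<T>. ratio T z \<rho>) = 1"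
    unfolding eventually_at_right_field using one assms(4) by blast
  have l1: "((\<lambda>\<rho>. \<Sum>T\<in>\<T>. ratio T z \<rho>) \<longlongrightarrow> (\<Sum>T\<in>\<T>. char_fun T z)) (at_right 0)"
    by (intro tendsto_sum) (use ratio_tendsto assms(2) in blast)
  have l2: "((\<lambda>\<rho>. \<Sum>T\<in>\<T>. ratio T z \<rho>) \<longlongrightarrow> 1) (at_right 0)"
    by (rule Lim_transform_eventually[OF tendsto_const]) (use ev in \<open>auto elim: eventually_mono\<close>)
  show ?thesis by (rule tendsto_unique[OF trivial_limit_at_right_real l1 l2])
qed

lemma dd_affine:
  fixes y :: "real^'n \<Rightarrow> real^'n" and A :: "real^'n^'n"
  assumes "e > 0" "\<And>s. \<bar>s\<bar> < e \<Longrightarrow> y (w + s *\<^sub>R r) = A *v (w + s *\<^sub>R r) + c"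
  shows "dir_deriv y r w = A *v r"
proof -
  have eq: "(\<lambda>s. A *v (w + s *\<^sub>R r) + c) = (\<lambda>s. (A *v w + c) + s *\<^sub>R (A *v r))"
    by (auto simp: matrix_vector_right_distrib matrix_vector_mult_scaleR algebra_simps)
  have "((\<lambda>s. A *v (w + s *\<^sub>R r) + c) has_vector_derivative A *v r) (at 0)"
    unfolding eq by (auto intro!: derivative_eq_intros)
  then have "((\<lambda>s. y (w + s *\<^sub>R r)) has_vector_derivative A *v r) (at 0)"
    by (rule has_vector_derivative_transform_within_open[of _ _ _ "ball 0 e"])
       (use assms in \<open>auto simp: dist_norm\<close>)
  then show ?thesis unfolding dir_deriv_def by (rule vector_derivative_at)
qed

lemma simplex_props:
  fixes T :: "(real^'n) set"
  assumes "int CARD('n) simplex T"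
  shows "convex T" "closed T" "aff_dim T = int CARD('n)" "interior T \<noteq> {}"
proof -
  show c: "convex T" by (rule convex_simplex[OF assms])
  show "closed T" by (rule closed_simplex[OF assms])
  show a: "aff_dim T = int CARD('n)" by (rule aff_dim_simplex[OF assms])
  then have h: "affine hull T = UNIV" using aff_dim_eq_full[of T] by simp
  have "T \<noteq> {}" using a by auto
  then show "interior T \<noteq> {}"
    using rel_interior_interior[OF h] rel_interior_eq_empty[OF c] by simp
qed

lemma negligible_overlap:
  fixes T T' :: "(real^'n) set"
  assumes "int CARD('n) simplex T" "int CARD('n) simplex T'"
    and "(T \<inter> T') face_of T" "(T \<inter> T') face_of T'" "T \<noteq> T'"
  shows "negligible (T \<inter> T')"
proof -
  note p = simplex_props[OF assms(1)] and p' = simplex_props[OF assms(2)]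
  have ne: "T \<inter> T' \<noteq> T"
  proof
    assume "T \<inter> T' = T"
    then have "T face_of T'" using assms(4) by simp
    then have "aff_dim T < aff_dim T'" using face_of_aff_dim_lt[OF p'(1) _ assms(5)] by blast
    then show False using p(3) p'(3) by simp
  qed
  have lt: "aff_dim (T \<inter> T') < int CARD('n)"
    using face_of_aff_dim_lt[OF p(1) assms(3) ne] p(3) by simp
  have "interior (T \<inter> T') = {}"
    using aff_dim_nonempty_interior[of "T \<inter> T'"] lt by auto
  moreover have "closed (T \<inter> T')" using p(2) p'(2) by auto
  ultimately have "frontier (T \<inter> T') = T \<inter> T'" by (simp add: frontier_def)
  moreover have "convex (T \<inter> T')" using p(1) p'(1) by (rule convex_Int)
  ultimately show ?thesis using negligible_convex_frontier by metis
qed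

lemma finite_lattice:
  fixes S :: "(real^'n) set"
  assumes "bounded S"
  shows "finite (S \<inter> lattice_pts)"
proof -
  obtain M where M: "\<And>x. x \<in> S \<Longrightarrow> norm x \<le> M" using assms bounded_iff by blast
  define K where "K = (of_int :: int \<Rightarrow> real) ` {-\<lceil>M\<rceil>..\<lceil>M\<rceil>}"
  have fK: "finite K" by (simp add: K_def)
  have "S \<inter> lattice_pts \<subseteq> (\<lambda>f. \<chi> i. f i) ` (PiE UNIV (\<lambda>_. K))"
  proof
    fix x assume x: "x \<in> S \<inter> lattice_pts"
    have "x $ i \<in> K" for i
    proof -
      obtain k where k: "x $ i = of_int k" using x unfolding lattice_pts_def by (auto elim: Ints_cases)
      have "\<bar>x $ i\<bar> \<le> M" using M[of x] x component_le_norm_cart[of x i] by auto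
      then have "\<bar>k\<bar> \<le> \<lceil>M\<rceil>" using k by linarith
      then show ?thesis unfolding K_def k by (intro image_eqI[of _ _ k]) auto
    qed
    then have "(\<lambda>i. x $ i) \<in> PiE UNIV (\<lambda>_. K)" by auto
    then show "x \<in> (\<lambda>f. \<chi> i. f i) ` (PiE UNIV (\<lambda>_. K))"
      by (intro image_eqI[of _ _ "\<lambda>i. x $ i"]) auto
  qed
  moreover have "finite (PiE (UNIV :: 'n set) (\<lambda>_. K))" using fK by (intro finite_PiE) auto
  ultimately show ?thesis by (rule finite_subset[OF _ finite_imageI])
qed

lemma sum_pairs_split:
  assumes "finite B" "finite R" "B \<subseteq> UNIV \<times> R"
  shows "(\<Sum>(x, r)\<in>B. F x r) = (\<Sum>r\<in>R. \<Sum>x\<in>{x. (x, r) \<in> B}. F x r)"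
proof -
  have fin: "finite {x. (x, r) \<in> B}" for r
    using finite_imageI[OF assms(1), of fst] by (rule finite_subset[rotated]) force
  have "(\<Sum>r\<in>R. \<Sum>x\<in>{x. (x, r) \<in> B}. F x r) = (\<Sum>(r, x)\<in>(SIGMA r:R. {x. (x, r) \<in> B}). F x r)"
    by (rule sum.Sigma[OF assms(2)]) (use fin in auto)
  also have "(SIGMA r:R. {x. (x, r) \<in> B}) = prod.swap ` B" using assms(3) by auto
  also have "(\<Sum>(r, x)\<in>prod.swap ` B. F x r) = (\<Sum>(x, r)\<in>B. F x r)"
    by (subst sum.reindex) (auto simp: case_prod_beta)
  finally show ?thesis by simp
qed




lemma bond_integral:
  fixes \<T> :: "(real^'n) set set" and y :: "real^'n \<Rightarrow> real^'n" and A :: "(real^'n) set \<Rightarrow> real^'n^'n"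
    and \<phi> :: "real^'n \<Rightarrow> real"
  assumes fin: "finite \<T>" and cc: "\<And>T. T \<in> \<T> \<Longrightarrow> convex T \<and> closed T"
    and pw: "pairwise (\<lambda>T T'. negligible (T \<inter> T')) \<T>"
    and Ac: "\<And>T z. T \<in> \<T> \<Longrightarrow> z \<in> T \<Longrightarrow> y z = A T *v z + c T"
    and op: "open \<Omega>c" "\<Omega>c \<subseteq> \<Union>\<T>"
    and seg: "\<And>t. 0 < t \<Longrightarrow> t < 1 \<Longrightarrow> x + t *\<^sub>R r \<in> \<Omega>c"
  shows "integral {0..1} (\<lambda>t. \<phi> (dir_deriv y r (x + t *\<^sub>R r)))
         = (\<Sum>T\<in>\<T>. integral {0..1} (\<lambda>t. char_fun T (x + t *\<^sub>R r)) * \<phi> (A T *v r))"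
proof -
  define I where "I T = {t::real. x + t *\<^sub>R r \<in> T}" for T
  have convI: "convex (I T)" if "T \<in> \<T>" for T
    unfolding convex_def I_def
  proof (intro allI impI ballI, clarsimp)
    fix s t u v :: real
    assume h: "x + s *\<^sub>R r \<in> T" "x + t *\<^sub>R r \<in> T" "0 \<le> u" "0 \<le> v" "u + v = 1"
    have "u *\<^sub>R (x + s *\<^sub>R r) + v *\<^sub>R (x + t *\<^sub>R r) \<in> T"
      using cc[OF that] h unfolding convex_def by blast
    moreover have "u *\<^sub>R (x + s *\<^sub>R r) + v *\<^sub>R (x + t *\<^sub>R r) = x + (u * s + v * t) *\<^sub>R r"
      using h(5) by (simp add: algebra_simps flip: scaleR_add_left)
    ultimately show "x + (u * s + v * t) *\<^sub>R r \<in> T" by simp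
  qed
  define N where "N = {0, 1} \<union> (\<Union>T\<in>\<T>. frontier (I T))"
  have negN: "negligible N"
    unfolding N_def
    by (intro negligible_Un negligible_Union) (auto intro: negligible_convex_frontier convI fin)
  have pt: "\<phi> (dir_deriv y r (x + t *\<^sub>R r)) = (\<Sum>T\<in>\<T>. char_fun T (x + t *\<^sub>R r) * \<phi> (A T *v r))"
    if t: "t \<in> {0..1} - N" for t
  proof -
    let ?z = "x + t *\<^sub>R r"
    have t01: "0 < t" "t < 1" using t unfolding N_def by auto
    have zin: "?z \<in> \<Omega>c" using seg[OF t01] .
    obtain e where e: "e > 0" "ball ?z e \<subseteq> \<Omega>c" using op(1) zin open_contains_ball by blast
    have s1: "(\<Sum>T\<in>\<T>. char_fun T ?z) = 1"
      by (rule char_sum[OF fin cc pw e(1)]) (use e(2) op(2) in auto)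
    have each: "char_fun T ?z * \<phi> (dir_deriv y r ?z) = char_fun T ?z * \<phi> (A T *v r)" if T: "T \<in> \<T>" for T
    proof (cases "t \<in> I T")
      case True
      have "t \<notin> frontier (I T)" using t T unfolding N_def by auto
      then have "t \<in> interior (I T)" using True closure_subset[of "I T"] unfolding frontier_def by auto
      then obtain d where d: "d > 0" "ball t d \<subseteq> I T" using mem_interior by blast
      have "dir_deriv y r ?z = A T *v r"
      proof (rule dd_affine[OF d(1)])
        fix s :: real assume s: "\<bar>s\<bar> < d"
        have "t + s \<in> ball t d" using s by (simp add: dist_real_def)
        then have "x + (t + s) *\<^sub>R r \<in> T" using d(2) unfolding I_def by auto
        moreover have "x + (t + s) *\<^sub>R r = ?z + s *\<^sub>R r" by (simp add: algebra_simps)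
        ultimately show "y (?z + s *\<^sub>R r) = A T *v (?z + s *\<^sub>R r) + c T" using Ac[OF T] by metis
      qed
      then show ?thesis by simp
    next
      case False
      then have "?z \<notin> T" unfolding I_def by auto
      then have "char_fun T ?z = 0" using char_zero cc[OF T] by blast
      then show ?thesis by simp
    qed
    have "\<phi> (dir_deriv y r ?z) = (\<Sum>T\<in>\<T>. char_fun T ?z) * \<phi> (dir_deriv y r ?z)" using s1 by simp
    also have "\<dots> = (\<Sum>T\<in>\<T>. char_fun T ?z * \<phi> (dir_deriv y r ?z))" by (simp add: sum_distrib_right)
    also have "\<dots> = (\<Sum>T\<in>\<T>. char_fun T ?z * \<phi> (A T *v r))" using each by (rule sum.cong[OF refl])
    finally show ?thesis .
  qed
  have "integral {0..1} (\<lambda>t. \<phi> (dir_deriv y r (x + t *\<^sub>R r)))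
        = integral {0..1} (\<lambda>t. \<Sum>T\<in>\<T>. char_fun T (x + t *\<^sub>R r) * \<phi> (A T *v r))"
    by (rule integral_spike[OF negN]) (use pt in auto)
  also have "\<dots> = (\<Sum>T\<in>\<T>. integral {0..1} (\<lambda>t. char_fun T (x + t *\<^sub>R r) * \<phi> (A T *v r)))"
  proof (rule integral_sum[OF fin])
    fix T assume "T \<in> \<T>"
    then have "(\<lambda>t. char_fun T (x + t *\<^sub>R r)) integrable_on {0..1}"
      using char_integrable cc by blast
    then show "(\<lambda>t. char_fun T (x + t *\<^sub>R r) * \<phi> (A T *v r)) integrable_on {0..1}"
      by (rule integrable_on_mult_left)
  qed
  also have "\<dots> = (\<Sum>T\<in>\<T>. integral {0..1} (\<lambda>t. char_fun T (x + t *\<^sub>R r)) * \<phi> (A T *v r))"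
    by simp
  finally show ?thesis .
qed




theorem proposition2p1:
  fixes \<Omega> \<Omega>c :: "(real^'n) set"
    and \<T> :: "(real^'n) set set"
    and R :: "(real^'n) set"
    and \<phi> :: "real^'n \<Rightarrow> real"
    and y :: "real^'n \<Rightarrow> real^'n"
  assumes "open \<Omega>" and "connected \<Omega>" and "bounded \<Omega>"
    and "open \<Omega>c" and "\<Omega>c \<subseteq> \<Omega>" and "\<Omega>c = interior (closure \<Omega>c)"
    and "triangulation \<T> (closure \<Omega>c)"
    and "finite R" and "R \<subseteq> lattice_pts - {0}"
    and "continuous_on (closure \<Omega>c) y"
    and "\<forall>T\<in>\<T>. \<exists>A::real^'n^'n. \<exists>c. \<forall>x\<in>T. y x = A *v x + c"
  shows "(\<Sum>(x, r)\<in>bonds (closure \<Omega> \<inter> lattice_pts) R - bonds_c (closure \<Omega> \<inter> lattice_pts) R \<Omega>c.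
             \<phi> (y (x + r) - y x))
         + (\<Sum>(x, r)\<in>bonds_c (closure \<Omega> \<inter> lattice_pts) R \<Omega>c.
             integral {0..1} (\<lambda>t. \<phi> (dir_deriv y r (x + t *\<^sub>R r))))
       = (\<Sum>(x, r)\<in>bonds (closure \<Omega> \<inter> lattice_pts) R - bonds_c (closure \<Omega> \<inter> lattice_pts) R \<Omega>c.
             \<phi> (y (x + r) - y x))
         + (\<Sum>T\<in>\<T>. \<Sum>r\<in>R.
             bond_weight (closure \<Omega> \<inter> lattice_pts) R \<Omega>c T r * \<phi> (dir_deriv_on y T r))"
proof -
  let ?L = "closure \<Omega> \<inter> lattice_pts"
  let ?B = "bonds_c ?L R \<Omega>c"
  obtain A :: "(real^'n) set \<Rightarrow> real^'n^'n" and c where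
    Ac: "\<And>T z. T \<in> \<T> \<Longrightarrow> z \<in> T \<Longrightarrow> y z = A T *v z + c T"
    using assms(11) by metis
  have tri: "finite \<T>" "\<Union>\<T> = closure \<Omega>c" "\<And>T. T \<in> \<T> \<Longrightarrow> int CARD('n) simplex T"
    "\<And>T T'. T \<in> \<T> \<Longrightarrow> T' \<in> \<T> \<Longrightarrow> (T \<inter> T') face_of T \<and> (T \<inter> T') face_of T'"
    using assms(7) unfolding triangulation_def by auto
  have cc: "convex T \<and> closed T" if "T \<in> \<T>" for T
    using simplex_props[OF tri(3)[OF that]] by auto
  have pw: "pairwise (\<lambda>T T'. negligible (T \<inter> T')) \<T>"
    unfolding pairwise_def using tri(3,4) negligible_overlap by blast
  have finL: "finite ?L" by (rule finite_lattice) (use assms(3) in auto)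
  have finB: "finite ?B"
  proof (rule finite_subset[OF _ finite_cartesian_product[OF finL assms(8)]])
    show "?B \<subseteq> ?L \<times> R" unfolding bonds_c_def bonds_def by auto
  qed
  have BR: "?B \<subseteq> UNIV \<times> R" unfolding bonds_c_def bonds_def by auto
  have ddon: "dir_deriv_on y T r = A T *v r" if T: "T \<in> \<T>" for T r
  proof -
    define w where "w = (SOME x. x \<in> interior T)"
    have "w \<in> interior T" unfolding w_def using simplex_props(4)[OF tri(3)[OF T]] by (simp add: some_in_eq)
    then obtain e where e: "e > 0" "ball w e \<subseteq> T" using mem_interior by blast
    have "dir_deriv y r w = A T *v r"
    proof (rule dd_affine[of "e / (norm r + 1)"])
      have np: "norm r + 1 > 0" using norm_ge_zero[of r] by linarith
      show "0 < e / (norm r + 1)" using e(1) np by simp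
      fix s :: real assume s: "\<bar>s\<bar> < e / (norm r + 1)"
      have "\<bar>s\<bar> * norm r \<le> \<bar>s\<bar> * (norm r + 1)" by (simp add: mult_left_mono)
      also have "\<dots> < e" using s np by (simp add: pos_less_divide_eq)
      finally have "w + s *\<^sub>R r \<in> ball w e" by (simp add: dist_norm)
      then show "y (w + s *\<^sub>R r) = A T *v (w + s *\<^sub>R r) + c T" using e(2) Ac[OF T] by blast
    qed
    then show ?thesis unfolding dir_deriv_on_def w_def .
  qed
  define W :: "real^'n \<Rightarrow> real^'n \<Rightarrow> (real^'n) set \<Rightarrow> real" where "W x r T = integral {0..1} (\<lambda>t. char_fun T (x + t *\<^sub>R r))" for x r T
  have bond: "integral {0..1} (\<lambda>t. \<phi> (dir_deriv y r (x + t *\<^sub>R r))) = (\<Sum>T\<in>\<T>. W x r T * \<phi> (A T *v r))"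
    if xr: "(x, r) \<in> ?B" for x r
    unfolding W_def
  proof (rule bond_integral[OF tri(1) cc pw Ac assms(4)])
    show "\<Omega>c \<subseteq> \<Union>\<T>" using tri(2) closure_subset by auto
    fix t :: real assume t: "0 < t" "t < 1"
    have seg: "open_segment x (x + r) \<subseteq> \<Omega>c" and r0: "r \<noteq> 0"
      using xr assms(9) unfolding bonds_c_def bonds_def by auto
    have "x + t *\<^sub>R r = (1 - t) *\<^sub>R x + t *\<^sub>R (x + r)" by (simp add: algebra_simps)
    then have "x + t *\<^sub>R r \<in> open_segment x (x + r)" using t r0 unfolding in_segment by auto
    then show "x + t *\<^sub>R r \<in> \<Omega>c" using seg by blast
  qed auto
  have "(\<Sum>(x, r)\<in>?B. integral {0..1} (\<lambda>t. \<phi> (dir_deriv y r (x + t *\<^sub>R r))))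
      = (\<Sum>(x, r)\<in>?B. \<Sum>T\<in>\<T>. W x r T * \<phi> (A T *v r))"
    by (rule sum.cong[OF refl]) (use bond in auto)
  also have "\<dots> = (\<Sum>T\<in>\<T>. \<Sum>(x, r)\<in>?B. W x r T * \<phi> (A T *v r))"
    by (simp only: case_prod_unfold) (rule sum.swap)
  also have "\<dots> = (\<Sum>T\<in>\<T>. \<Sum>r\<in>R. \<Sum>x\<in>{x. (x, r) \<in> ?B}. W x r T * \<phi> (A T *v r))"
    by (rule sum.cong[OF refl], rule sum_pairs_split[OF finB assms(8) BR])
  also have "\<dots> = (\<Sum>T\<in>\<T>. \<Sum>r\<in>R. bond_weight ?L R \<Omega>c T r * \<phi> (dir_deriv_on y T r))"
    by (intro sum.cong refl) (simp add: bond_weight_def W_def ddon sum_distrib_right)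
  finally show ?thesis by simp
qed


end
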